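(* Let $\langle N,P,c,b,\mathcal{A}\rangle$ be a PB instance satisfying the High Cardinality Budget Property ($l_o>h_{\mathcal{A}}$), and let $S$ be the output of the minimax-disutility version of Ordered-Relax on it. Then $ALG\le\left(2-\frac{1}{h_o}\right)OPT$, where $ALG=\max_{i\in N}(b-u_i(S))$ and $OPT=\min_{T\subseteq P,\,c(T)\le b}\max_{i\in N}(b-u_i(T))$.
   Context: A PB instance is $\langle N,P,c,b,\mathcal{A}\rangle$ with voters $N=\{1,\dots,n\}$, projects $P=\{p_1,\dots,p_m\}$, costs $c:P\to\mathbb{N}$, budget $b\in\mathbb{N}$, and approval sets $A_i\subseteq P$. $c(S)=\sum_{p\in S}c(p)$; $S$ is feasible if $c(S)\le b$; $u_i(S)=c(S\cap A_i)$; the disutility of voter $i$ from $S$ is $b-u_i(S)$. The ordered-fill algorithm with respect to a complete order $\succ$ on $P$ adds projects from highest- to lowest-ranked, stopping as soon as the next project does not fit within the budget. $l_o$ and $h_o$ denote the minimum and maximum cardinality of the outputs of ordered-fill algorithms over all complete orders on $P$; $h_{\mathcal{A}}=\max_{i\in N}|A_i|$. The instance satisfies the High Cardinality Budget Property if $l_o>h_{\mathcal{A}}$. The minimax-disutility Ordered-Relax algorithm: compute an optimal solution $(q^*,x^* )$ of the LP: minimize $q$ subject to $q\ge b-\sum_{p\in A_i}c(p)x_p$ for all $i\in N$, $\sum_{p\in P}c(p)x_p\le b$, $0\le x_p\le1$ for all $p$, $q\ge0$; then order projects in non-increasing order of $c(p)x^*_p$ (ties arbitrary), and starting from $S=\emptyset$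 add projects in this order, stopping as soon as the next project does not fit within the budget; output $S$. *)

theory Defs
  imports Complex_Main
begin

fun ordered_fill :: "('p \<Rightarrow> nat) \<Rightarrow> nat \<Rightarrow> 'p list \<Rightarrow> 'p list" where
  "ordered_fill c r [] = []"
| "ordered_fill c r (p # ps) =
     (if c p \<le> r then p # ordered_fill c (r - c p) ps else [])"

(* complete orders on P, represented as lists ranking P from highest to lowest *)
definition orders_of :: "'p set \<Rightarrow> 'p list set" where
  "orders_of P = {xs. distinct xs \<and> set xs = P}"

definition fill_cards :: "'p set \<Rightarrow> ('p \<Rightarrow> nat) \<Rightarrow> nat \<Rightarrow> nat set" where
  "fill_cards P c b = (\<lambda>xs. card (set (ordered_fill c b xs))) ` orders_of P"

definition l_o :: "'p set \<Rightarrow> ('p \<Rightarrow> nat) \<Rightarrow> nat \<Rightarrow> nat" where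
  "l_o P c b = Min (fill_cards P c b)"

definition h_o :: "'p set \<Rightarrow> ('p \<Rightarrow> nat) \<Rightarrow> nat \<Rightarrow> nat" where
  "h_o P c b = Max (fill_cards P c b)"

definition h_A :: "'v set \<Rightarrow> ('v \<Rightarrow> 'p set) \<Rightarrow> nat" where
  "h_A N A = Max ((\<lambda>i. card (A i)) ` N)"

definition cost :: "('p \<Rightarrow> nat) \<Rightarrow> 'p set \<Rightarrow> nat" where
  "cost c S = (\<Sum>p\<in>S. c p)"

definition utility :: "('p \<Rightarrow> nat) \<Rightarrow> ('v \<Rightarrow> 'p set) \<Rightarrow> 'v \<Rightarrow> 'p set \<Rightarrow> nat" where
  "utility c A i S = cost c (S \<inter> A i)"

definition max_disutility ::
  "'v set \<Rightarrow> 'p set \<Rightarrow> ('p \<Rightarrow> nat) \<Rightarrow> nat \<Rightarrow> ('v \<Rightarrow> 'p set) \<Rightarrow> 'p set \<Rightarrow> real" where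
  "max_disutility N P c b A S = Max ((\<lambda>i. real b - real (utility c A i S)) ` N)"

definition OPT :: "'v set \<Rightarrow> 'p set \<Rightarrow> ('p \<Rightarrow> nat) \<Rightarrow> nat \<Rightarrow> ('v \<Rightarrow> 'p set) \<Rightarrow> real" where
  "OPT N P c b A = Min (max_disutility N P c b A ` {T. T \<subseteq> P \<and> cost c T \<le> b})"

definition lp_feasible ::
  "'v set \<Rightarrow> 'p set \<Rightarrow> ('p \<Rightarrow> nat) \<Rightarrow> nat \<Rightarrow> ('v \<Rightarrow> 'p set) \<Rightarrow> real \<Rightarrow> ('p \<Rightarrow> real) \<Rightarrow> bool" where
  "lp_feasible N P c b A q x \<longleftrightarrow>
     (\<forall>i\<in>N. q \<ge> real b - (\<Sum>p\<in>A i. real (c p) * x p)) \<and>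
     (\<Sum>p\<in>P. real (c p) * x p) \<le> real b \<and>
     (\<forall>p\<in>P. 0 \<le> x p \<and> x p \<le> 1) \<and> q \<ge> 0"

definition lp_optimal ::
  "'v set \<Rightarrow> 'p set \<Rightarrow> ('p \<Rightarrow> nat) \<Rightarrow> nat \<Rightarrow> ('v \<Rightarrow> 'p set) \<Rightarrow> real \<Rightarrow> ('p \<Rightarrow> real) \<Rightarrow> bool" where
  "lp_optimal N P c b A q x \<longleftrightarrow> lp_feasible N P c b A q x \<and>
     (\<forall>q' x'. lp_feasible N P c b A q' x' \<longrightarrow> q \<le> q')"

(* possible outputs of the minimax-disutility Ordered-Relax algorithm
   (ties in the order broken arbitrarily) *)
definition ordered_relax_outputs ::
  "'v set \<Rightarrow> 'p set \<Rightarrow> ('p \<Rightarrow> nat) \<Rightarrow> nat \<Rightarrow> ('v \<Rightarrow> 'p set) \<Rightarrow> 'p set set" where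
  "ordered_relax_outputs N P c b A =
     {set (ordered_fill c b xs) | xs q x. lp_optimal N P c b A q x \<and> xs \<in> orders_of P \<and>
        sorted_wrt (\<lambda>p p'. real (c p') * x p' \<le> real (c p) * x p) xs}"

end

theory Submission
  imports Defs
begin

lemma fill_shape:
  "\<exists>k\<le>length xs. ordered_fill c r xs = take k xs \<and> sum_list (map c (take k xs)) \<le> r \<and>
     (k < length xs \<longrightarrow> r < sum_list (map c (take k xs)) + c (xs!k))"
proof (induction xs arbitrary: r)
  case Nil
  then show ?case by simp
next
  case (Cons p ps)
  show ?case
  proof (cases "c p \<le> r")
    case True
    from Cons.IH[of "r - c p"] obtain k where k: "k \<le> length ps"
      "ordered_fill c (r - c p) ps = take k ps" "sum_list (map c (take k ps)) \<le> r - c p"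
      "k < length ps \<longrightarrow> r - c p < sum_list (map c (take k ps)) + c (ps!k)" by blast
    show ?thesis
      apply (rule exI[of _ "Suc k"])
      using k True by auto
  next
    case False
    show ?thesis
      apply (rule exI[of _ 0])
      using False by auto
  qed
qed

lemma fill_cards_finite:
  assumes "finite P"
  shows "finite (fill_cards P c b)"
proof -
  have "fill_cards P c b \<subseteq> {0..card P}"
  proof
    fix n assume "n \<in> fill_cards P c b"
    then obtain xs where xs: "xs \<in> orders_of P" "n = card (set (ordered_fill c b xs))"
      unfolding fill_cards_def by auto
    obtain k where "ordered_fill c b xs = take k xs"
      using fill_shape[of xs c b] by blast
    then have "set (ordered_fill c b xs) \<subseteq> P" using xs(1) set_take_subset
      unfolding orders_of_def by fastforce
    then have "n \<le> card P" using xs(2) card_mono assms by blast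
    then show "n \<in> {0..card P}" by simp
  qed
  then show ?thesis using finite_subset by blast
qed

lemma OPT_ge:
  assumes fN: "finite N" and nN: "N \<noteq> {}" and fP: "finite P"
    and AP: "\<forall>i\<in>N. A i \<subseteq> P"
    and opt: "lp_optimal N P c b A q x"
  shows "q \<le> OPT N P c b A"
proof -
  let ?F = "{T. T \<subseteq> P \<and> cost c T \<le> b}"
  have fF: "finite ?F" using fP by simp
  have "{} \<in> ?F" by (simp add: cost_def)
  then have neF: "?F \<noteq> {}" by blast
  then have "OPT N P c b A \<in> max_disutility N P c b A ` ?F"
    unfolding OPT_def using fF by (intro Min_in) auto
  then obtain T where T: "T \<subseteq> P" "cost c T \<le> b" "OPT N P c b A = max_disutility N P c b A T"
    by auto
  define xT where "xT = (\<lambda>p. if p \<in> T then (1::real) else 0)"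
  have fT: "finite T" using T(1) fP finite_subset by blast
  have fin_img: "finite ((\<lambda>i. real b - real (utility c A i T)) ` N)" using fN by simp
  have md_ge: "real b - real (utility c A i T) \<le> max_disutility N P c b A T" if "i \<in> N" for i
    unfolding max_disutility_def using that fin_img by (intro Max_ge) auto
  have sumA: "(\<Sum>p\<in>A i. real (c p) * xT p) = real (utility c A i T)" if iN: "i \<in> N" for i
  proof -
    have fA: "finite (A i)" using AP iN fP finite_subset by blast
    have "(\<Sum>p\<in>A i. real (c p) * xT p) = (\<Sum>p\<in>A i. if p \<in> T then real (c p) else 0)"
      unfolding xT_def by (intro sum.cong) auto
    also have "\<dots> = (\<Sum>p\<in>A i \<inter> T. real (c p))"
      using fA by (simp add: sum.inter_restrict)
    also have "\<dots> = real (utility c A i T)"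
      unfolding utility_def cost_def by (simp add: Int_commute)
    finally show ?thesis .
  qed
  have "utility c A i T \<le> cost c T" for i
    unfolding utility_def cost_def using fT by (intro sum_mono2) auto
  then have ut: "real (utility c A i T) \<le> real b" for i using T(2)
    by (meson le_trans of_nat_le_iff)
  have sumP: "(\<Sum>p\<in>P. real (c p) * xT p) = real (cost c T)"
  proof -
    have "(\<Sum>p\<in>P. real (c p) * xT p) = (\<Sum>p\<in>P. if p \<in> T then real (c p) else 0)"
      unfolding xT_def by (intro sum.cong) auto
    also have "\<dots> = (\<Sum>p\<in>P \<inter> T. real (c p))"
      using fP by (simp add: sum.If_cases)
    also have "P \<inter> T = T" using T(1) by auto
    finally show ?thesis unfolding cost_def by simp
  qed
  obtain i0 where "i0 \<in> N" using nN by auto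
  then have nonneg: "0 \<le> max_disutility N P c b A T" using md_ge[of i0] ut[of i0] by linarith
  have "lp_feasible N P c b A (max_disutility N P c b A T) xT"
    unfolding lp_feasible_def
    using md_ge sumA sumP T(2) nonneg by (auto simp: xT_def)
  then show ?thesis using opt T(3) unfolding lp_optimal_def by auto
qed


theorem theorem8:
  fixes N :: "'v set" and P :: "'p set" and c :: "'p \<Rightarrow> nat" and b :: nat
    and A :: "'v \<Rightarrow> 'p set" and S :: "'p set"
  assumes "finite N" and "N \<noteq> {}" and "finite P"
    and "\<forall>i\<in>N. A i \<subseteq> P"
    and "l_o P c b > h_A N A"
    and "S \<in> ordered_relax_outputs N P c b A"
  shows "max_disutility N P c b A S \<le> (2 - 1 / real (h_o P c b)) * OPT N P c b A"
proof -
  note fN = assms(1) and nN = assms(2) and fP = assms(3) and AP = assms(4) and hcbp = assms(5)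
  obtain xs q x where S: "S = set (ordered_fill c b xs)" and opt: "lp_optimal N P c b A q x"
    and xs: "xs \<in> orders_of P"
    and srt: "sorted_wrt (\<lambda>p p'. real (c p') * x p' \<le> real (c p) * x p) xs"
    using assms(6) unfolding ordered_relax_outputs_def by blast
  have dist: "distinct xs" and setxs: "set xs = P" using xs unfolding orders_of_def by auto
  define y where "y = (\<lambda>p. real (c p) * x p)"
  have feas: "lp_feasible N P c b A q x" using opt unfolding lp_optimal_def by auto
  have qA: "real b - (\<Sum>p\<in>A i. y p) \<le> q" if "i \<in> N" for i
    using feas that unfolding lp_feasible_def y_def by auto
  have YP: "(\<Sum>p\<in>P. y p) \<le> real b" using feas unfolding lp_feasible_def y_def by auto
  have x01: "0 \<le> x p \<and> x p \<le> 1" if "p \<in> P" for p using feas that unfolding lp_feasible_def by auto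
  have y0: "0 \<le> y p" if "p \<in> P" for p using x01[OF that] unfolding y_def by simp
  have yc: "y p \<le> real (c p)" if "p \<in> P" for p
    using x01[OF that] unfolding y_def by (simp add: mult_left_le)
  have q0: "0 \<le> q" using feas unfolding lp_feasible_def by auto
  have qOPT: "q \<le> OPT N P c b A" using OPT_ge[OF fN nN fP AP opt] .
  obtain k where k: "k \<le> length xs" "ordered_fill c b xs = take k xs"
    "sum_list (map c (take k xs)) \<le> b"
    "k < length xs \<longrightarrow> b < sum_list (map c (take k xs)) + c (xs!k)"
    using fill_shape[of xs c b] by blast
  have Sk: "S = set (take k xs)" using S k(2) by simp
  have cardS: "card S = k" using Sk dist k(1) by (simp add: distinct_card)
  have SP: "S \<subseteq> P" using Sk setxs set_take_subset by fastforce
  have fS: "finite S" using SP fP finite_subset by blast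
  have fc: "finite (fill_cards P c b)" using fill_cards_finite[OF fP] .
  have kin: "card S \<in> fill_cards P c b" unfolding fill_cards_def using xs S by blast
  have lo_le: "l_o P c b \<le> card S" unfolding l_o_def using fc kin by (intro Min_le)
  have ho_ge: "card S \<le> h_o P c b" unfolding h_o_def using fc kin by (intro Max_ge)
  have hA: "card (A i) \<le> h_A N A" if "i \<in> N" for i
    unfolding h_A_def using fN that by (intro Max_ge) auto
  have bound: "real b - real (utility c A i S) \<le> (2 - 1 / real (h_o P c b)) * OPT N P c b A"
    if iN: "i \<in> N" for i
  proof -
    have AiP: "A i \<subseteq> P" using AP iN by auto
    have fA: "finite (A i)" using AiP fP finite_subset by blast
    define B where "B = A i - S"
    define D where "D = S - A i"
    define j where "j = card B"
    have cardA: "card (A i) < card S" using hA[OF iN] hcbp lo_le by linarith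
    have cA: "card (A i) = card (A i \<inter> S) + j"
      unfolding j_def B_def using fA card_Int_Diff[of "A i" S] by (simp add: Int_commute)
    have cS: "card S = card (A i \<inter> S) + card D"
      unfolding D_def using fS card_Int_Diff[of S "A i"] by (simp add: Int_commute)
    have cD: "j + 1 \<le> card D" using cA cS cardA by linarith
    have hj: "j + 1 \<le> h_o P c b" using cD cS ho_ge by linarith
    have util: "real (utility c A i S) = (\<Sum>p\<in>A i \<inter> S. real (c p))"
      unfolding utility_def cost_def by (simp add: Int_commute)
    have "(\<Sum>p\<in>A i \<inter> S. y p) \<le> (\<Sum>p\<in>A i \<inter> S. real (c p))"
      using AiP yc by (intro sum_mono) auto
    moreover have "(\<Sum>p\<in>A i. y p) = (\<Sum>p\<in>A i \<inter> S. y p) + (\<Sum>p\<in>B. y p)"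
      unfolding B_def using fA sum.Int_Diff by blast
    ultimately have d1: "real b - real (utility c A i S) \<le> q + (\<Sum>p\<in>B. y p)"
      using qA[OF iN] util by linarith
    have main: "real b - real (utility c A i S) \<le> (2 - 1 / real (j + 1)) * q"
    proof (cases "k < length xs")
      case False
      then have "S = P" using Sk setxs k(1) by simp
      then have "B = {}" unfolding B_def using AiP by auto
      then show ?thesis using d1 j_def by simp
    next
      case True
      define p' where "p' = xs ! k"
      have dr: "drop k xs = p' # drop (Suc k) xs" unfolding p'_def using True
        by (simp add: Cons_nth_drop_Suc)
      have xsplit: "xs = take k xs @ p' # drop (Suc k) xs" using dr
        by (metis append_take_drop_id)
      have srt2: "sorted_wrt (\<lambda>p p'. y p' \<le> y p) (take k xs @ p' # drop (Suc k) xs)"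
        using srt xsplit unfolding y_def by metis
      have geS: "y p' \<le> y p" if "p \<in> S" for p
        using srt2 that Sk by (auto simp: sorted_wrt_append)
      have leR: "y p \<le> y p'" if "p \<in> P" "p \<notin> S" for p
      proof -
        have "p \<in> set (take k xs @ p' # drop (Suc k) xs)" using that setxs xsplit by metis
        then have "p = p' \<or> p \<in> set (drop (Suc k) xs)" using that Sk by auto
        then show ?thesis using srt2 by (auto simp: sorted_wrt_append)
      qed
      have p'P: "p' \<in> P" using True setxs p'_def by auto
      have y'0: "0 \<le> y p'" using y0[OF p'P] .
      have YB: "(\<Sum>p\<in>B. y p) \<le> real j * y p'"
      proof -
        have "(\<Sum>p\<in>B. y p) \<le> (\<Sum>p\<in>B. y p')"
          using leR AiP unfolding B_def by (intro sum_mono) auto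
        then show ?thesis unfolding j_def by simp
      qed
      have YD: "real (card D) * y p' \<le> (\<Sum>p\<in>D. y p)"
      proof -
        have "(\<Sum>p\<in>D. y p') \<le> (\<Sum>p\<in>D. y p)"
          using geS unfolding D_def by (intro sum_mono) auto
        then show ?thesis by simp
      qed
      have "D \<inter> A i = {}" unfolding D_def by auto
      moreover have fD: "finite D" using fS unfolding D_def by auto
      ultimately have "(\<Sum>p\<in>D \<union> A i. y p) = (\<Sum>p\<in>D. y p) + (\<Sum>p\<in>A i. y p)"
        using fA by (simp add: sum.union_disjoint)
      moreover have "(\<Sum>p\<in>D \<union> A i. y p) \<le> (\<Sum>p\<in>P. y p)"
        using fP y0 SP AiP unfolding D_def by (intro sum_mono2) auto
      ultimately have "(\<Sum>p\<in>D. y p) + (\<Sum>p\<in>A i. y p) \<le> real b" using YP by linarith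
      then have "(\<Sum>p\<in>D. y p) \<le> q" using qA[OF iN] by linarith
      moreover have "real (j + 1) * y p' \<le> real (card D) * y p'"
        using cD y'0 by (intro mult_right_mono) auto
      ultimately have yq: "real (j + 1) * y p' \<le> q" using YD by linarith
      have "real j * y p' \<le> real j / real (j + 1) * q"
      proof -
        have "real j * (real (j + 1) * y p') \<le> real j * q" using yq by (intro mult_left_mono) auto
        then show ?thesis by (simp add: field_simps)
      qed
      moreover have "real j / real (j + 1) * q = (1 - 1 / real (j + 1)) * q"
        by (simp add: field_simps)
      ultimately have "real j * y p' \<le> (1 - 1 / real (j + 1)) * q" by linarith
      then show ?thesis using d1 YB by (simp add: algebra_simps)
    qed
    have "1 / real (j + 1) \<ge> 1 / real (h_o P c b)"
      using hj by (intro divide_left_mono) auto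
    then have "(2 - 1 / real (j + 1)) * q \<le> (2 - 1 / real (h_o P c b)) * q"
      using q0 by (intro mult_right_mono) auto
    moreover have "(2 - 1 / real (h_o P c b)) * q \<le> (2 - 1 / real (h_o P c b)) * OPT N P c b A"
    proof -
      have "1 / real (h_o P c b) \<le> 1" using hj by simp
      then show ?thesis using qOPT by (intro mult_left_mono) auto
    qed
    ultimately show ?thesis using main by linarith
  qed
  show ?thesis unfolding max_disutility_def using fN nN bound by (subst Max_le_iff) auto
qed

end
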